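(* Let $\beta,\rho$ be simple closed curves in the plane that intersect in $\ell\ge 3$ points. Suppose that exactly one intersection point $z$ of $\beta$ and $\rho$ is tangential, and all other intersection points are crossings (transversal). Then there exists a digon $(\alpha,\gamma)$ of $(\beta,\rho)$ such that $\alpha\cup\gamma$ does not contain $z$.
   Context: A segment of a simple closed curve $\beta$ is a subset of $\beta$ homeomorphic to $[0,1]$. For non-disjoint simple closed curves $\beta,\rho$ in the plane, a digon of $(\beta,\rho)$ is a pair of segments $(\alpha,\gamma)$ with $\alpha\subseteq\beta$ and $\gamma\subseteq\rho$ such that (i) $\alpha$ and $\gamma$ have the same two endpoints $x,y$; (ii) the only points of $\beta$ in $\gamma$ are $x$ and $y$; (iii) the only points of $\rho$ in $\alpha$ are $x$ and $y$. An intersection point is a crossing if the curves meet transversally there, and tangential otherwise. *)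

theory Defs
  imports "HOL-Analysis.Analysis"
begin

definition simple_closed_curve :: "complex set \<Rightarrow> bool" where
  "simple_closed_curve S \<longleftrightarrow>
     (\<exists>g. simple_path g \<and> pathfinish g = pathstart g \<and> path_image g = S)"

definition segment_between :: "complex set \<Rightarrow> complex \<Rightarrow> complex \<Rightarrow> bool" where
  "segment_between A x y \<longleftrightarrow>
     (\<exists>h k. homeomorphism {0..1::real} A h k \<and> h 0 = x \<and> h 1 = y)"

definition digon :: "complex set \<Rightarrow> complex set \<Rightarrow> complex set \<Rightarrow> complex set \<Rightarrow> bool" where
  "digon \<beta> \<rho> \<alpha> \<gamma> \<longleftrightarrow>
     (\<exists>x y. \<alpha> \<subseteq> \<beta> \<and> \<gamma> \<subseteq> \<rho> \<and>
        segment_between \<alpha> x y \<and> segment_between \<gamma> x y \<and>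
        \<beta> \<inter> \<gamma> = {x, y} \<and> \<rho> \<inter> \<alpha> = {x, y})"

definition crossing_point :: "complex set \<Rightarrow> complex set \<Rightarrow> complex \<Rightarrow> bool" where
  "crossing_point \<beta> \<rho> z \<longleftrightarrow> z \<in> \<beta> \<inter> \<rho> \<and>
     (\<exists>g. arc g \<and> path_image g \<subseteq> \<rho> \<and> g (1/2) = z \<and> path_image g \<inter> \<beta> = {z} \<and>
          \<not> connected_component (- \<beta>) (g 0) (g 1))"

definition tangential_point :: "complex set \<Rightarrow> complex set \<Rightarrow> complex \<Rightarrow> bool" where
  "tangential_point \<beta> \<rho> z \<longleftrightarrow> z \<in> \<beta> \<inter> \<rho> \<and> \<not> crossing_point \<beta> \<rho> z"

end

theory Submission
  imports Defs
begin

lemma loop_inj: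
  assumes "simple_path r" "x \<in> {0..1}" "y \<in> {0..1}" "r x = r y" "x \<noteq> y"
  shows "(x = 0 \<and> y = 1) \<or> (x = 1 \<and> y = 0)"
proof -
  have "\<forall>x\<in>{0..1}. \<forall>y\<in>{0..1}. r x = r y \<longrightarrow> x = y \<or> x = 0 \<and> y = 1 \<or> x = 1 \<and> y = 0"
    using assms(1) by (simp add: simple_path_def loop_free_def)
  then show ?thesis using assms(2-5) by blast
qed

lemma seg_conn:
  fixes A :: "real set"
  assumes "connected A" "p \<in> A" "q \<in> A"
  shows "closed_segment p q \<subseteq> A"
  using connected_contains_Icc[OF assms(1,2,3)] connected_contains_Icc[OF assms(1,3,2)]
  by (auto simp: closed_segment_eq_real_ivl)

lemma crossing_sides:
  fixes r :: "real \<Rightarrow> complex"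
  assumes sp: "simple_path r" and lp: "pathfinish r = pathstart r" and rho: "path_image r = \<rho>"
    and at: "0 \<le> a" "a < t" "t < c" "c \<le> 1"
    and inb: "r a \<in> \<beta>" "r c \<in> \<beta>" "r 0 \<in> \<beta>"
    and cr: "crossing_point \<beta> \<rho> (r t)"
    and X: "connected X" "X \<subseteq> - \<beta>" "r ` {a<..<t} \<subseteq> X" "r ` {t<..<c} \<subseteq> X"
  shows False
proof -
  obtain g where g: "arc g" "path_image g \<subseteq> \<rho>" "g (1/2) = r t" "path_image g \<inter> \<beta> = {r t}"
     "\<not> connected_component (- \<beta>) (g 0) (g 1)"
    using cr unfolding crossing_point_def by blast
  define G where "G = path_image g"
  have t01: "t \<in> {0<..<1}" using at by auto
  have r1: "r 1 = r 0" using lp by (simp add: pathfinish_def pathstart_def)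
  have rt0: "r t \<noteq> r 0"
  proof
    assume "r t = r 0"
    moreover have "t \<in> {0..1}" "(0::real) \<in> {0..1}" "t \<noteq> 0" using t01 by auto
    ultimately have "(t = 0 \<and> (0::real) = 1) \<or> (t = 1 \<and> (0::real) = 0)" using loop_inj[OF sp] by blast
    then show False using t01 by simp
  qed
  have r0G: "r 0 \<notin> G" unfolding G_def using g(4) inb(3) rt0 by (metis IntI singletonD)
  define K where "K = {0..1} \<inter> r -` G"
  have contr: "continuous_on {0..1} r" using sp simple_path_imp_path path_def by blast
  have "closed K" unfolding K_def
    by (rule continuous_closed_preimage[OF contr]) (auto simp: G_def closed_path_image arc_imp_path g)
  then have cK: "compact K" unfolding K_def by (simp add: compact_eq_bounded_closed K_def bounded_Int)
  have Gs: "G \<subseteq> r ` {0..1}" using g(2) rho unfolding G_def path_image_def by simp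
  have rK: "r ` K = G" unfolding K_def using Gs by blast
  have K01: "K \<subseteq> {0<..<1}" using r0G r1 unfolding K_def by (auto simp: less_eq_real_def)
  have injK: "inj_on r K"
  proof (rule inj_onI)
    fix x y assume "x \<in> K" "y \<in> K" "r x = r y"
    then show "x = y" using loop_inj[OF sp, of x y] K01 by force
  qed
  obtain \<phi> where hom: "homeomorphism K G r \<phi>"
    using homeomorphism_compact[OF cK continuous_on_subset[OF contr] rK injK] K_def by blast
  define \<psi> where "\<psi> = \<phi> \<circ> g"
  have contg: "continuous_on {0..1} g" using g arc_imp_path path_def by blast
  have gG: "g ` {0..1} = G" by (simp add: G_def path_image_def)
  have contpsi: "continuous_on {0..1} \<psi>" unfolding \<psi>_def
    by (rule continuous_on_compose[OF contg]) (use hom gG in \<open>simp add: homeomorphism_def\<close>)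
  have psiK: "\<psi> s \<in> K" if "s \<in> {0..1}" for s
    using hom gG that unfolding \<psi>_def homeomorphism_def by auto
  have rpsi: "r (\<psi> s) = g s" if "s \<in> {0..1}" for s
    using hom gG that unfolding \<psi>_def homeomorphism_def by auto
  have ginj: "inj_on g {0..1}" using g arc_def by blast
  have psiinj: "\<psi> x = \<psi> y \<Longrightarrow> x \<in> {0..1} \<Longrightarrow> y \<in> {0..1} \<Longrightarrow> x = y" for x y
    using rpsi ginj by (metis inj_onD)
  have psih: "\<psi> (1/2) = t"
  proof -
    have "r (\<psi> (1/2)) = r t" using rpsi g(3) by simp
    moreover have "\<psi> (1/2) \<in> K" using psiK by simp
    moreover have "(1/2::real) \<in> {0..1}" by simp
    then have "g (1/2) \<in> G" using gG by blast
    then have "t \<in> K" using g(3) t01 unfolding K_def by auto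
    ultimately show ?thesis using injK inj_onD by metis
  qed
  have gnb: "r (\<psi> s) \<notin> \<beta>" if "s \<in> {0..1}" "s \<noteq> 1/2" for s
  proof -
    have "g s \<noteq> g (1/2)" using ginj that inj_onD[of g "{0..1}" s "1/2"] by auto
    moreover have "g s \<in> G" using that gG by auto
    ultimately show ?thesis using rpsi that g G_def by auto
  qed
  have conL: "connected (\<psi> ` {0..1/2})"
    by (rule connected_continuous_image) (auto intro: continuous_on_subset[OF contpsi])
  have conR: "connected (\<psi> ` {1/2..1})"
    by (rule connected_continuous_image) (auto intro: continuous_on_subset[OF contpsi])
  have inL: "\<psi> 0 \<in> \<psi> ` {0..1/2}" "t \<in> \<psi> ` {0..1/2}" using psih by force+
  have inR: "\<psi> 1 \<in> \<psi> ` {1/2..1}" "t \<in> \<psi> ` {1/2..1}" using psih by force+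
  have betw: "r v \<notin> \<beta>" if "v \<in> closed_segment (\<psi> s) t" "v \<noteq> t" "s = 0 \<or> s = 1" for v s
  proof -
    have "v \<in> \<psi> ` (if s = 0 then {0..1/2} else {1/2..1})"
      using that seg_conn[OF conL inL] seg_conn[OF conR inR] by auto
    moreover have "\<psi> ` (if s = 0 then {0..1/2} else {1/2..1}) \<subseteq> \<psi> ` {0..1::real}" by auto
    ultimately obtain u where u: "u \<in> {0..1}" "v = \<psi> u"
      by blast
    moreover have "u \<noteq> 1/2" using u psih that(2) by force
    ultimately show ?thesis using gnb by auto
  qed
  have p0: "\<psi> 0 \<noteq> t" "\<psi> 1 \<noteq> t" using psiinj[of 0 "1/2"] psiinj[of 1 "1/2"] psih by auto
  have opp: "(\<psi> 0 < t \<and> t < \<psi> 1) \<or> (\<psi> 1 < t \<and> t < \<psi> 0)"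
  proof (rule ccontr)
    assume "\<not> ?thesis"
    then consider "\<psi> 0 < t" "\<psi> 1 < t" | "\<psi> 0 > t" "\<psi> 1 > t" using p0 by linarith
    then show False
    proof cases
      case 1
      show False
      proof (cases "\<psi> 0 \<le> \<psi> 1")
        case True
        then have "\<psi> 1 \<in> \<psi> ` {0..1/2}" using connected_contains_Icc[OF conL inL] 1 by auto
        then obtain u where "u \<in> {0..1/2}" "\<psi> 1 = \<psi> u" by auto
        then show False using psiinj[of 1 u] by auto
      next
        case False
        then have "\<psi> 0 \<in> \<psi> ` {1/2..1}" using connected_contains_Icc[OF conR inR] 1 by auto
        then obtain u where "u \<in> {1/2..1}" "\<psi> 0 = \<psi> u" by auto
        then show False using psiinj[of 0 u] by auto
      qed
    next
      case 2
      show False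
      proof (cases "\<psi> 0 \<ge> \<psi> 1")
        case True
        then have "\<psi> 1 \<in> \<psi> ` {0..1/2}" using connected_contains_Icc[OF conL inL(2) inL(1)] 2 by auto
        then obtain u where "u \<in> {0..1/2}" "\<psi> 1 = \<psi> u" by auto
        then show False using psiinj[of 1 u] by auto
      next
        case False
        then have "\<psi> 0 \<in> \<psi> ` {1/2..1}" using connected_contains_Icc[OF conR inR(2) inR(1)] 2 by auto
        then obtain u where "u \<in> {1/2..1}" "\<psi> 0 = \<psi> u" by auto
        then show False using psiinj[of 0 u] by auto
      qed
    qed
  qed
  have inX: "r (\<psi> s) \<in> X" if s: "s = 0 \<or> s = 1" for s
  proof -
    show ?thesis
    proof (cases "\<psi> s < t")
      case True
      have "a < \<psi> s"
      proof (rule ccontr)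
        assume "\<not> a < \<psi> s"
        then have "a \<in> closed_segment (\<psi> s) t" using True at by (auto simp: closed_segment_eq_real_ivl)
        then show False using betw[OF _ _ s, of a] inb at by auto
      qed
      then show ?thesis using X True by auto
    next
      case False
      then have T: "t < \<psi> s" using p0 s by auto
      have "\<psi> s < c"
      proof (rule ccontr)
        assume "\<not> \<psi> s < c"
        then have "c \<in> closed_segment (\<psi> s) t" using T at by (auto simp: closed_segment_eq_real_ivl)
        then show False using betw[OF _ _ s, of c] inb at by auto
      qed
      then show ?thesis using X T by auto
    qed
  qed
  have "connected_component (- \<beta>) (g 0) (g 1)"
    unfolding connected_component_def using inX[of 0] inX[of 1] rpsi X by auto
  then show False using g by blast
qed
lemma chord_side:
  fixes c1 c2 c :: "real \<Rightarrow> complex"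
  assumes "arc c1" "arc c2" "arc c"
    and "pathstart c1 = a" "pathfinish c1 = b" "pathstart c2 = a" "pathfinish c2 = b"
    and "pathstart c = a" "pathfinish c = b" "a \<noteq> b"
    and "path_image c1 \<inter> path_image c2 = {a,b}"
    and "path_image c1 \<inter> path_image c = {a,b}"
    and "path_image c2 \<inter> path_image c = {a,b}"
    and ne: "path_image c \<inter> inside(path_image c1 \<union> path_image c2) \<noteq> {}"
    and D: "connected D" "D \<subseteq> inside(path_image c1 \<union> path_image c2)" "D \<inter> path_image c = {}"
  shows "closure D \<inter> (path_image c1 \<union> path_image c2) \<subseteq> path_image c1
       \<or> closure D \<inter> (path_image c1 \<union> path_image c2) \<subseteq> path_image c2"
proof -
  let ?T = "path_image c" let ?T1 = "path_image c1" let ?T2 = "path_image c2"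
  obtain I: "inside(?T1 \<union> ?T) \<inter> inside(?T2 \<union> ?T) = {}"
          "inside(?T1 \<union> ?T) \<union> inside(?T2 \<union> ?T) \<union> (?T - {a,b}) = inside(?T1 \<union> ?T2)"
    using split_inside_simple_closed_curve[of c1 a b c2 c] assms arc_imp_simple_path by metis
  have cl: "closed (?T1 \<union> ?T)" "closed (?T2 \<union> ?T)"
    using assms by (simp_all add: closed_Un closed_path_image arc_imp_path)
  have op: "open (inside(?T1 \<union> ?T))" "open (inside(?T2 \<union> ?T))"
    using cl open_inside by auto
  have Dsub: "D \<subseteq> inside(?T1 \<union> ?T) \<union> inside(?T2 \<union> ?T)"
    using D I by blast
  have gen: "closure D \<inter> (?T1 \<union> ?T2) \<subseteq> Ti"
    if "D \<subseteq> inside(Ti \<union> ?T)" "closed (Ti \<union> ?T)" "Ti \<inter> ?T = {a,b}" "a \<in> Ti" "b \<in> Ti"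
       "inside(Ti \<union> ?T) \<subseteq> inside(?T1 \<union> ?T2)" for Ti
  proof -
    have "closure D \<subseteq> closure (inside(Ti \<union> ?T))"
      using that closure_mono by blast
    also have "\<dots> \<subseteq> inside(Ti \<union> ?T) \<union> (Ti \<union> ?T)"
      using frontier_inside_subset[OF that(2)] closure_Un_frontier by blast
    finally have "closure D \<subseteq> inside(Ti \<union> ?T) \<union> (Ti \<union> ?T)" .
    moreover have "inside(?T1 \<union> ?T2) \<inter> (?T1 \<union> ?T2) = {}" by simp
    moreover have "?T \<inter> (?T1 \<union> ?T2) \<subseteq> {a,b}" using assms by blast
    ultimately show ?thesis using that by blast
  qed
  have ab: "a \<in> ?T1" "b \<in> ?T1" "a \<in> ?T2" "b \<in> ?T2"
    using assms by (auto simp: pathstart_in_path_image pathfinish_in_path_image)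
  show ?thesis
  proof (cases "D \<subseteq> inside(?T1 \<union> ?T)")
    case True
    then show ?thesis using gen[of ?T1] cl ab assms I by blast
  next
    case False
    then have "D \<subseteq> inside(?T2 \<union> ?T)"
      using Dsub op I D(1) 
      using connectedD[of D "inside(?T1 \<union> ?T)" "inside(?T2 \<union> ?T)"] by blast
    then show ?thesis using gen[of ?T2] cl ab assms I by blast
  qed
qed
lemma loop_inj2:
  assumes "simple_path r" "x \<in> {0..1}" "y \<in> {0..1}" "r x = r y" "0 < x" "x < 1"
  shows "x = y"
  using loop_inj[OF assms(1-4)] assms(5,6) by auto

lemma shift_loop:
  assumes "simple_closed_curve S" "z \<in> S"
  obtains b where "simple_path b" "pathfinish b = pathstart b" "path_image b = S" "b 0 = z"
proof -
  obtain g where g: "simple_path g" "pathfinish g = pathstart g" "path_image g = S"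
    using assms(1) unfolding simple_closed_curve_def by blast
  obtain u where u: "u \<in> {0..1}" "g u = z" using assms(2) g(3) unfolding path_image_def by auto
  show ?thesis
  proof
    show "simple_path (shiftpath u g)" using simple_path_shiftpath[OF g(1,2)] u by auto
    show "pathfinish (shiftpath u g) = pathstart (shiftpath u g)" using closed_shiftpath[OF g(2) u(1)] .
    show "path_image (shiftpath u g) = S" using path_image_shiftpath[OF u(1) g(2)] g(3) by simp
    show "shiftpath u g 0 = z" using pathstart_shiftpath[of u g] u unfolding pathstart_def by auto
  qed
qed

lemma loop_arcs:
  fixes b :: "real \<Rightarrow> complex"
  assumes sp: "simple_path b" and lp: "pathfinish b = pathstart b" and pq: "0 < p" "p < q" "q < 1"
  defines "c1 \<equiv> subpath p q b" and "c2 \<equiv> reversepath (subpath q 1 b +++ subpath 0 p b)"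
  shows "arc c1" "arc c2" "pathstart c1 = b p" "pathfinish c1 = b q"
     "pathstart c2 = b p" "pathfinish c2 = b q"
     "path_image c1 = b ` {p..q}" "path_image c2 = b ` {q..1} \<union> b ` {0..p}"
     "path_image c1 \<inter> path_image c2 = {b p, b q}"
     "path_image c1 \<union> path_image c2 = path_image b"
     "\<And>s. s \<in> {p<..<q} \<Longrightarrow> b s \<notin> path_image c2"
proof -
  have b1: "b 1 = b 0" using lp by (simp add: pathfinish_def pathstart_def)
  have neq: "b p \<noteq> b q" using loop_inj2[OF sp, of p q] pq by auto
  show "arc c1" unfolding c1_def by (rule arc_simple_path_subpath[OF sp]) (use pq neq in auto)
  have a1: "arc (subpath q 1 b)"
    by (rule arc_simple_path_subpath[OF sp]) (use pq loop_inj2[OF sp, of q 0] b1 in auto)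
  have a2: "arc (subpath 0 p b)"
    by (rule arc_simple_path_subpath[OF sp]) (use pq loop_inj2[OF sp, of p 0] in auto)
  have im1: "path_image (subpath q 1 b) = b ` {q..1}" using pq by (simp add: path_image_subpath)
  have im2: "path_image (subpath 0 p b) = b ` {0..p}" using pq by (simp add: path_image_subpath)
  have disj: "b ` {q..1} \<inter> b ` {0..p} \<subseteq> {b 0}"
  proof
    fix w assume "w \<in> b ` {q..1} \<inter> b ` {0..p}"
    then obtain s s' where s: "s \<in> {q..1}" "s' \<in> {0..p}" "w = b s" "w = b s'" by auto
    show "w \<in> {b 0}"
    proof (cases "s = 1")
      case True then show ?thesis using s b1 by auto
    next
      case False
      then have "s = s'" using loop_inj2[OF sp, of s s'] s pq by auto
      then show ?thesis using s pq by auto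
    qed
  qed
  have "arc (subpath q 1 b +++ subpath 0 p b)"
    by (rule arc_join[OF a1 a2]) (use b1 im1 im2 disj in auto)
  then show "arc c2" unfolding c2_def by (simp add: arc_reversepath)
  show "pathstart c1 = b p" "pathfinish c1 = b q" unfolding c1_def by auto
  show "pathstart c2 = b p" "pathfinish c2 = b q" unfolding c2_def by (auto simp: b1)
  show im: "path_image c1 = b ` {p..q}" unfolding c1_def using pq by (simp add: path_image_subpath)
  show imc2: "path_image c2 = b ` {q..1} \<union> b ` {0..p}" unfolding c2_def
    using path_image_join[of "subpath q 1 b" "subpath 0 p b"] im1 im2 b1 by auto
  show nin: "b s \<notin> path_image c2" if "s \<in> {p<..<q}" for s
  proof
    assume "b s \<in> path_image c2"
    then have "b s \<in> b ` ({q..1} \<union> {0..p})" using imc2 by (simp add: image_Un)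
    then obtain s' where "s' \<in> {q..1} \<union> {0..p}" "b s = b s'" by (metis imageE)
    then show False using loop_inj2[OF sp, of s s'] that pq by auto
  qed
  show "path_image c1 \<inter> path_image c2 = {b p, b q}"
  proof
    show "path_image c1 \<inter> path_image c2 \<subseteq> {b p, b q}"
    proof
      fix w assume w: "w \<in> path_image c1 \<inter> path_image c2"
      then obtain s where s: "s \<in> {p..q}" "w = b s" using im by auto
      show "w \<in> {b p, b q}"
      proof (cases "s = p \<or> s = q")
        case True then show ?thesis using s by auto
      next
        case False then have "s \<in> {p<..<q}" using s by auto
        then show ?thesis using nin w s by auto
      qed
    qed
    show "{b p, b q} \<subseteq> path_image c1 \<inter> path_image c2" using im imc2 pq by auto
  qed
  have "{p..q} \<union> ({q..1} \<union> {0..p}) = {0..1::real}" using pq by auto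
  then show "path_image c1 \<union> path_image c2 = path_image b"
    using im imc2 unfolding path_image_def by (metis image_Un)
qed

theorem proposition6p2:
  fixes \<beta> \<rho> :: "complex set" and l :: nat and z :: complex
  assumes "simple_closed_curve \<beta>" and "simple_closed_curve \<rho>"
    and "finite (\<beta> \<inter> \<rho>)" and "card (\<beta> \<inter> \<rho>) = l" and "l \<ge> 3"
    and "tangential_point \<beta> \<rho> z"
    and "\<forall>w \<in> \<beta> \<inter> \<rho> - {z}. crossing_point \<beta> \<rho> w"
  shows "\<exists>\<alpha> \<gamma>. digon \<beta> \<rho> \<alpha> \<gamma> \<and> z \<notin> \<alpha> \<union> \<gamma>"
proof -
  have z: "z \<in> \<beta>" "z \<in> \<rho>" using assms(6) unfolding tangential_point_def by auto
  obtain b where b: "simple_path b" "pathfinish b = pathstart b" "path_image b = \<beta>" "b 0 = z"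
    using shift_loop[OF assms(1) z(1)] by blast
  obtain r where r: "simple_path r" "pathfinish r = pathstart r" "path_image r = \<rho>" "r 0 = z"
    using shift_loop[OF assms(2) z(2)] by blast
  have b1: "b 1 = z" using b(2,4) by (simp add: pathfinish_def pathstart_def)
  have r1: "r 1 = z" using r(2,4) by (simp add: pathfinish_def pathstart_def)
  have contr: "continuous_on {0..1} r" using r(1) simple_path_imp_path path_def by blast
  have r_in: "r s \<in> \<rho>" if "s \<in> {0..1}" for s using r(3) that unfolding path_image_def by blast
  have b_in: "b s \<in> \<beta>" if "s \<in> {0..1}" for s using b(3) that unfolding path_image_def by blast
  define T where "T = {s \<in> {0..<1}. r s \<in> \<beta>}"
  have injr: "inj_on r {0..<1}"
  proof (rule inj_onI)
    fix x y assume "x \<in> {0..<1}" "y \<in> {0..<1}" "r x = r y"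
    then show "x = y" using loop_inj[OF r(1), of x y] by auto
  qed
  have injb: "inj_on b {0..<1}"
  proof (rule inj_onI)
    fix x y assume "x \<in> {0..<1}" "y \<in> {0..<1}" "b x = b y"
    then show "x = y" using loop_inj[OF b(1), of x y] by auto
  qed
  have rT: "r ` T = \<beta> \<inter> \<rho>"
  proof
    show "r ` T \<subseteq> \<beta> \<inter> \<rho>" unfolding T_def using r_in by auto
    show "\<beta> \<inter> \<rho> \<subseteq> r ` T"
    proof
      fix w assume w: "w \<in> \<beta> \<inter> \<rho>"
      then obtain s where s: "s \<in> {0..1}" "w = r s" using r(3) unfolding path_image_def by auto
      show "w \<in> r ` T"
      proof (cases "s = 1")
        case True
        then have "w = r 0" using s r1 r(4) by simp
        moreover have "0 \<in> T" unfolding T_def using z r(4) by simp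
        ultimately show ?thesis by blast
      next
        case False
        then have "s \<in> T" unfolding T_def using s w by auto
        then show ?thesis using s by blast
      qed
    qed
  qed
  have T01: "T \<subseteq> {0..<1}" unfolding T_def by auto
  have injT: "inj_on r T" using inj_on_subset[OF injr T01] .
  have finT: "finite T" using finite_imageD[OF _ injT] rT assms(3) by simp
  have cardT: "card T = l" using card_image[OF injT] rT assms(4) by simp
  have T0: "0 \<in> T" unfolding T_def using z r(4) by simp
  define ts where "ts = sorted_list_of_set T"
  have lents: "length ts = l" using cardT finT ts_def by simp
  have setts: "set ts = T" using finT ts_def by simp
  have sts: "sorted_wrt (<) ts" unfolding ts_def by (rule strict_sorted_list_of_set)
  define t where "t i = (if i < l then ts ! i else 1)" for i
  have tT: "t i \<in> T" if "i < l" for i using that lents setts unfolding t_def by auto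
  have t_lt1: "t i < 1" if "i < l" for i using tT[OF that] T01 by auto
  have t_ge0: "0 \<le> t i" for i using tT T01 unfolding t_def by (cases "i < l") fastforce+
  have t_le1: "t i \<le> 1" for i using t_lt1 unfolding t_def by (cases "i < l") fastforce+
  have t_mono: "t i < t k" if "i < k" "k \<le> l" for i k
  proof (cases "k < l")
    case True
    then show ?thesis using sorted_wrt_nth_less[OF sts that(1)] lents that unfolding t_def by auto
  next
    case False
    then show ?thesis using t_lt1[of i] that unfolding t_def by auto
  qed
  have t_mono2: "t i \<le> t k" if "i \<le> k" "k \<le> l" for i k
  proof (cases "i = k")
    case False
    then have "i < k" using that(1) by simp
    then show ?thesis using t_mono[OF _ that(2)] by (simp add: less_imp_le)
  qed simp
  have t_refl: "i < k" if "t i < t k" "i \<le> l" "k \<le> l" for i k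
  proof (rule ccontr)
    assume "\<not> i < k"
    then have "t k \<le> t i" using t_mono2[of k i] that(2) by simp
    then show False using that(1) by simp
  qed
  have Tt: "\<exists>i<l. s = t i" if "s \<in> T" for s
  proof -
    have "s \<in> set ts" using that setts by simp
    then obtain i where "i < length ts" "ts ! i = s" unfolding in_set_conv_nth by blast
    then show ?thesis using lents unfolding t_def by auto
  qed
  have t0: "t 0 = 0"
  proof -
    obtain k where "k < l" "0 = t k" using Tt[OF T0] by blast
    then show ?thesis using t_mono[of 0 k] t_ge0[of 0] by (cases "k = 0") auto
  qed
  have t_pos: "0 < t i" if "0 < i" "i \<le> l" for i using t_mono[of 0 i] that t0 by simp
  have gap: "r s \<notin> \<beta>" if "j < l" "s \<in> {t j <..< t (Suc j)}" for j s
  proof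
    assume rs: "r s \<in> \<beta>"
    have "s \<in> {0..<1}" using that t_ge0[of j] t_le1[of "Suc j"] by auto
    then have "s \<in> T" using rs unfolding T_def by auto
    then obtain i where i: "i < l" "s = t i" using Tt by blast
    then have "j < i" "i < Suc j" using t_refl[of j i] t_refl[of i "Suc j"] that by auto
    then show False by simp
  qed
  define Ob where "Ob j = r ` {t j <..< t (Suc j)}" for j
  have O_conn: "connected (Ob j)" for j
  proof -
    have "continuous_on {t j <..< t (Suc j)} r"
      by (rule continuous_on_subset[OF contr]) (use t_ge0[of j] t_le1[of "Suc j"] in auto)
    then show ?thesis unfolding Ob_def by (rule connected_continuous_image) simp
  qed
  have O_ne: "Ob j \<noteq> {}" if "j < l" for j
    using t_mono[of j "Suc j"] that unfolding Ob_def by auto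
  have O_nb: "Ob j \<subseteq> - \<beta>" if "j < l" for j using gap[OF that] unfolding Ob_def by auto
  note J = Jordan_inside_outside[OF b(1) b(2), unfolded b(3)]
  have side: "Ob j \<subseteq> inside \<beta> \<or> Ob j \<subseteq> outside \<beta>" if "j < l" for j
  proof -
    have "Ob j \<subseteq> inside \<beta> \<union> outside \<beta>" using O_nb[OF that] J by blast
    then show ?thesis
      using connectedD[OF O_conn[of j], of "inside \<beta>" "outside \<beta>"] J by blast
  qed
  have zt: "r (t k) \<noteq> z" if "0 < k" "k < l" for k
  proof
    assume "r (t k) = z"
    then have "r (t k) = r 0" using r(4) by simp
    then have "t k = 0" using loop_inj2[OF r(1), of "t k" 0] t_pos[of k] t_lt1[of k] that by auto
    then show False using t_pos[of k] that by simp
  qed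
  have rtb: "r (t k) \<in> \<beta>" if "k \<le> l" for k
  proof (cases "k < l")
    case True then show ?thesis using tT[OF True] unfolding T_def by auto
  next
    case False then have "t k = 1" unfolding t_def by simp
    then show ?thesis using r1 z by simp
  qed
  have cross: "\<not> (Ob (k - 1) \<subseteq> outside \<beta> \<and> Ob k \<subseteq> outside \<beta>)" if "1 \<le> k" "k < l" for k
  proof
    assume a: "Ob (k - 1) \<subseteq> outside \<beta> \<and> Ob k \<subseteq> outside \<beta>"
    have sk: "Suc (k - 1) = k" using that by simp
    have cp: "crossing_point \<beta> \<rho> (r (t k))"
      using assms(7) rtb[of k] r_in[of "t k"] t_ge0[of k] t_le1[of k] zt[of k] that by auto
    show False
    proof (rule crossing_sides[OF r(1) r(2) r(3), of "t (k - 1)" "t k" "t (Suc k)" \<beta> "outside \<beta>"])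
      show "0 \<le> t (k - 1)" by (rule t_ge0)
      show "t (k - 1) < t k" using t_mono[of "k - 1" k] that by simp
      show "t k < t (Suc k)" using t_mono[of k "Suc k"] that by simp
      show "t (Suc k) \<le> 1" by (rule t_le1)
      show "r (t (k - 1)) \<in> \<beta>" using rtb[of "k - 1"] that by simp
      show "r (t (Suc k)) \<in> \<beta>" using rtb[of "Suc k"] that by simp
      show "r 0 \<in> \<beta>" using r(4) z by simp
      show "crossing_point \<beta> \<rho> (r (t k))" by (rule cp)
      show "connected (outside \<beta>)" using J by blast
      show "outside \<beta> \<subseteq> - \<beta>" using J by blast
      show "r ` {t (k - 1)<..<t k} \<subseteq> outside \<beta>" using a sk unfolding Ob_def by metis
      show "r ` {t k<..<t (Suc k)} \<subseteq> outside \<beta>" using a unfolding Ob_def by blast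
    qed
  qed
  define \<sigma> where "\<sigma> w = (THE s. s \<in> {0..<1} \<and> b s = w)" for w
  have sig: "\<sigma> w \<in> {0..<1} \<and> b (\<sigma> w) = w" if wb: "w \<in> \<beta>" for w
  proof -
    obtain s where s: "s \<in> {0..1}" "b s = w" using wb b(3) unfolding path_image_def by auto
    have ex: "\<exists>s. s \<in> {0..<1} \<and> b s = w"
    proof (cases "s = 1")
      case True then show ?thesis using s b1 b(4) by (intro exI[of _ 0]) auto
    next
      case False then show ?thesis using s by (intro exI[of _ s]) auto
    qed
    have "\<exists>!s. s \<in> {0..<1} \<and> b s = w"
    proof (rule ex_ex1I[OF ex])
      fix x y assume "x \<in> {0..<1} \<and> b x = w" "y \<in> {0..<1} \<and> b y = w"
      then show "x = y" using injb inj_onD[of b "{0..<1}" x y] by auto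
    qed
    then show ?thesis unfolding \<sigma>_def by (rule theI')
  qed
  have sig_eq: "\<sigma> (b s) = s" if "s \<in> {0..<1}" for s
    using sig[of "b s"] b_in[of s] that injb inj_onD by fastforce
  have sig_pos: "0 < \<sigma> w" if "w \<in> \<beta>" "w \<noteq> z" for w
  proof -
    have "\<sigma> w \<noteq> 0" using sig[OF that(1)] that(2) b(4) by auto
    then show ?thesis using sig[OF that(1)] by auto
  qed
  define len where "len j = \<bar>\<sigma> (r (t (Suc j))) - \<sigma> (r (t j))\<bar>" for j
  define C where "C = {j. 1 \<le> j \<and> Suc j < l \<and> (Ob j \<subseteq> inside \<beta> \<or> l = 3)}"
  have Cne: "C \<noteq> {}"
  proof (cases "l = 3")
    case True then have "1 \<in> C" unfolding C_def by simp
    then show ?thesis by blast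
  next
    case False
    show ?thesis
    proof (cases "Ob 1 \<subseteq> inside \<beta>")
      case True then have "1 \<in> C" unfolding C_def using assms(5) by simp
      then show ?thesis by blast
    next
      case F: False
      then have "Ob 1 \<subseteq> outside \<beta>" using side[of 1] assms(5) by auto
      then have "\<not> Ob 2 \<subseteq> outside \<beta>" using cross[of 2] assms(5) by simp
      then have "Ob 2 \<subseteq> inside \<beta>" using side[of 2] assms(5) by auto
      then have "2 \<in> C" unfolding C_def using assms(5) False by simp
      then show ?thesis by blast
    qed
  qed
  have Cfin: "finite C" unfolding C_def by (rule finite_subset[of _ "{..<l}"]) auto
  obtain j where jC: "j \<in> C" and jmin: "\<And>m. m \<in> C \<Longrightarrow> len j \<le> len m"
  proof -
    have "Min (len ` C) \<in> len ` C" using Cfin Cne by simp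
    then obtain j where "j \<in> C" "len j = Min (len ` C)" by auto
    then show ?thesis using that Cfin by auto
  qed
  have j1: "1 \<le> j" and jl: "Suc j < l" using jC unfolding C_def by auto
  define X1 where "X1 = r (t j)"
  define Y1 where "Y1 = r (t (Suc j))"
  have X1b: "X1 \<in> \<beta>" "X1 \<in> \<rho>" "X1 \<noteq> z"
    using rtb[of j] r_in[of "t j"] t_ge0[of j] t_le1[of j] zt[of j] j1 jl unfolding X1_def by auto
  have Y1b: "Y1 \<in> \<beta>" "Y1 \<in> \<rho>" "Y1 \<noteq> z"
    using rtb[of "Suc j"] r_in[of "t (Suc j)"] t_ge0[of "Suc j"] t_le1[of "Suc j"] zt[of "Suc j"] jl
    unfolding Y1_def by auto
  have tj01: "0 < t j" "t (Suc j) < 1" using t_pos[of j] j1 jl t_lt1[of "Suc j"] by auto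
  have tjlt: "t j < t (Suc j)" using t_mono[of j "Suc j"] jl by simp
  have XY: "X1 \<noteq> Y1"
  proof
    assume "X1 = Y1"
    then have "t j = t (Suc j)" using loop_inj2[OF r(1), of "t j" "t (Suc j)"] tj01 tjlt
      unfolding X1_def Y1_def by auto
    then show False using tjlt by simp
  qed
  have sXY: "\<sigma> X1 \<noteq> \<sigma> Y1" using sig[OF X1b(1)] sig[OF Y1b(1)] XY by metis
  define p where "p = min (\<sigma> X1) (\<sigma> Y1)"
  define q where "q = max (\<sigma> X1) (\<sigma> Y1)"
  have pq: "0 < p" "p < q" "q < 1"
    using sig_pos[OF X1b(1) X1b(3)] sig_pos[OF Y1b(1) Y1b(3)] sig[OF X1b(1)] sig[OF Y1b(1)] sXY
    unfolding p_def q_def by auto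
  have lenj: "len j = q - p" unfolding len_def p_def q_def X1_def[symmetric] Y1_def[symmetric] by auto
  define u1 where "u1 = (if \<sigma> X1 \<le> \<sigma> Y1 then t j else t (Suc j))"
  define u2 where "u2 = (if \<sigma> X1 \<le> \<sigma> Y1 then t (Suc j) else t j)"
  have ru: "r u1 = b p" "r u2 = b q"
    using sig[OF X1b(1)] sig[OF Y1b(1)] unfolding u1_def u2_def p_def q_def X1_def Y1_def by auto
  define c where "c = subpath u1 u2 r"
  have imc: "path_image c = r ` {t j .. t (Suc j)}"
    unfolding c_def u1_def u2_def using tjlt by (auto simp: path_image_subpath)
  have u01: "u1 \<in> {0..1}" "u2 \<in> {0..1}" unfolding u1_def u2_def using tj01 tjlt by auto
  have bpq: "b p \<noteq> b q" using ru XY unfolding u1_def u2_def X1_def Y1_def by (auto split: if_splits)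
  have arcc: "arc c" unfolding c_def by (rule arc_simple_path_subpath[OF r(1) u01]) (use ru bpq in auto)
  have cst: "pathstart c = b p" "pathfinish c = b q" unfolding c_def using ru by auto
  have crho: "path_image c \<subseteq> \<rho>" using imc r_in tj01 tjlt by auto
  have bpqin: "b p \<in> path_image c" "b q \<in> path_image c"
    using cst pathstart_in_path_image pathfinish_in_path_image by metis+
  have cbeta: "path_image c \<inter> \<beta> = {b p, b q}"
  proof
    show "path_image c \<inter> \<beta> \<subseteq> {b p, b q}"
    proof
      fix w assume w: "w \<in> path_image c \<inter> \<beta>"
      then obtain s where s: "s \<in> {t j..t (Suc j)}" "w = r s" using imc by auto
      have "s = t j \<or> s = t (Suc j)" using gap[of j s] jl s w by force
      then show "w \<in> {b p, b q}" using s ru unfolding u1_def u2_def by (auto split: if_splits)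
    qed
    show "{b p, b q} \<subseteq> path_image c \<inter> \<beta>"
      using bpqin b_in[of p] b_in[of q] pq by auto
  qed
  define c1 where "c1 = subpath p q b"
  define c2 where "c2 = reversepath (subpath q 1 b +++ subpath 0 p b)"
  note LA = loop_arcs[OF b(1) b(2) pq, folded c1_def c2_def, unfolded b(3)]
  have zc1: "z \<notin> b ` {p..q}"
  proof
    assume "z \<in> b ` {p..q}"
    then obtain s where "s \<in> {p..q}" "b s = b 0" using b(4) by auto
    then show False using loop_inj2[OF b(1), of s 0] pq by auto
  qed
  have key: "b s \<notin> \<rho>" if s: "s \<in> {p<..<q}" for s
  proof
    assume bs: "b s \<in> \<rho>"
    define w where "w = b s"
    have s01: "s \<in> {0..<1}" using s pq by auto
    have wb: "w \<in> \<beta>" using b_in[of s] s01 unfolding w_def by auto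
    have sw: "\<sigma> w = s" using sig_eq[OF s01] unfolding w_def by simp
    have wz: "w \<noteq> z" using sig_eq[of 0] sw s pq b(4) by auto
    obtain k0 where k0: "k0 \<in> T" "r k0 = w" using rT wb bs unfolding w_def by (metis IntI imageE)
    obtain k where k: "k < l" "k0 = t k" using Tt[OF k0(1)] by blast
    have rk: "r (t k) = w" using k k0 by simp
    have k0': "k \<noteq> 0"
    proof
      assume "k = 0" then show False using rk wz t0 r(4) by simp
    qed
    have kj: "k \<noteq> j"
    proof
      assume "k = j"
      then have "w = X1" using rk X1_def by simp
      then have "s = \<sigma> X1" using sw by simp
      then show False using s unfolding p_def q_def by auto
    qed
    have kj2: "k \<noteq> Suc j"
    proof
      assume "k = Suc j"
      then have "w = Y1" using rk Y1_def by simp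
      then have "s = \<sigma> Y1" using sw by simp
      then show False using s unfolding p_def q_def by auto
    qed
    show False
    proof (cases "l = 3")
      case True
      then have "j = 1" using j1 jl by simp
      then show False using kj kj2 k0' k(1) True by simp
    next
      case l3: False
      have Oj: "Ob j \<subseteq> inside \<beta>" using jC l3 unfolding C_def by simp
      obtain m where m: "m = k - 1 \<or> m = k" "Ob m \<subseteq> inside \<beta>"
      proof -
        have "\<not> (Ob (k - 1) \<subseteq> outside \<beta> \<and> Ob k \<subseteq> outside \<beta>)" using cross[of k] k0' k by simp
        moreover have "Ob (k - 1) \<subseteq> inside \<beta> \<or> Ob (k - 1) \<subseteq> outside \<beta>" using side[of "k - 1"] k by simp
        moreover have "Ob k \<subseteq> inside \<beta> \<or> Ob k \<subseteq> outside \<beta>" using side[of k] k by simp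
        ultimately show ?thesis using that by blast
      qed
      have ml: "m < l" using m k by auto
      have mj: "m \<noteq> j" using m kj kj2 k0' by auto
      have wm: "w = r (t m) \<or> w = r (t (Suc m))" using m rk k0' by (auto simp: Suc_pred)
      have tm: "t m < t (Suc m)" using t_mono[of m "Suc m"] ml by simp
      have disj: "Ob m \<inter> path_image c = {}"
      proof (rule ccontr)
        assume "Ob m \<inter> path_image c \<noteq> {}"
        then obtain a a' where a: "a \<in> {t m<..<t (Suc m)}" "a' \<in> {t j..t (Suc j)}" "r a = r a'"
          unfolding Ob_def imc by blast
        have a01: "0 < a" "a < 1" using a(1) t_ge0[of m] t_le1[of "Suc m"] by auto
        have "a = a'" using loop_inj2[OF r(1), of a a'] a a01 t_ge0[of j] t_le1[of "Suc j"] by auto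
        then show False
        proof (cases "m < j")
          case True
          then have "t (Suc m) \<le> t j" using t_mono2[of "Suc m" j] jl by simp
          then show False using a \<open>a = a'\<close> by auto
        next
          case False
          then have "t (Suc j) \<le> t m" using t_mono2[of "Suc j" m] ml mj by simp
          then show False using a \<open>a = a'\<close> by auto
        qed
      qed
      have ne: "path_image c \<inter> inside (path_image c1 \<union> path_image c2) \<noteq> {}"
      proof -
        have "Ob j \<subseteq> path_image c" unfolding Ob_def imc by auto
        then show ?thesis using Oj O_ne[of j] jl LA(10) by auto
      qed
      have CS: "closure (Ob m) \<inter> (path_image c1 \<union> path_image c2) \<subseteq> path_image c1
         \<or> closure (Ob m) \<inter> (path_image c1 \<union> path_image c2) \<subseteq> path_image c2"
      proof (rule chord_side[OF LA(1) LA(2) arcc LA(3) LA(4) LA(5) LA(6) cst bpq LA(9)])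
        show "path_image c1 \<inter> path_image c = {b p, b q}" using cbeta LA(10) bpqin LA(9) by blast
        show "path_image c2 \<inter> path_image c = {b p, b q}" using cbeta LA(10) bpqin LA(9) by blast
        show "path_image c \<inter> inside (path_image c1 \<union> path_image c2) \<noteq> {}" by (rule ne)
        show "connected (Ob m)" by (rule O_conn)
        show "Ob m \<subseteq> inside (path_image c1 \<union> path_image c2)" using m(2) LA(10) by simp
        show "Ob m \<inter> path_image c = {}" by (rule disj)
      qed
      have clO: "r ` {t m..t (Suc m)} \<subseteq> closure (Ob m)"
      proof -
        have "r ` closure {t m<..<t (Suc m)} \<subseteq> closure (Ob m)"
        proof (rule image_closure_subset)
          show "continuous_on (closure {t m<..<t (Suc m)}) r"
            by (rule continuous_on_subset[OF contr]) (use tm t_ge0[of m] t_le1[of "Suc m"] in auto)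
          show "closed (closure (Ob m))" by simp
          show "r ` {t m<..<t (Suc m)} \<subseteq> closure (Ob m)" unfolding Ob_def by (rule closure_subset)
        qed
        then show ?thesis using tm by simp
      qed
      have e1: "r (t m) \<in> closure (Ob m) \<inter> \<beta>" using clO tm rtb[of m] ml by auto
      have e2: "r (t (Suc m)) \<in> closure (Ob m) \<inter> \<beta>" using clO tm rtb[of "Suc m"] ml by auto
      have wc2: "w \<notin> path_image c2" using LA(11)[OF s] unfolding w_def by simp
      have sub1: "closure (Ob m) \<inter> \<beta> \<subseteq> b ` {p..q}"
        using CS wc2 wm e1 e2 LA(10) LA(7) by blast
      have e1c: "r (t m) \<in> b ` {p..q}" and e2c: "r (t (Suc m)) \<in> b ` {p..q}" using sub1 e1 e2 by auto
      have m1: "1 \<le> m"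
      proof (rule ccontr)
        assume "\<not> 1 \<le> m" then have "m = 0" by simp
        then show False using e1c zc1 t0 r(4) by simp
      qed
      have ml2: "Suc m < l"
      proof (rule ccontr)
        assume "\<not> Suc m < l" then have "t (Suc m) = 1" unfolding t_def by simp
        then show False using e2c zc1 r1 by simp
      qed
      have mC: "m \<in> C" unfolding C_def using m1 ml2 m(2) by simp
      have sg: "\<sigma> (r (t m)) \<in> {p..q}" "\<sigma> (r (t (Suc m))) \<in> {p..q}"
        using e1c e2c sig_eq pq by auto
      have "len m < q - p"
      proof -
        have "\<sigma> (r (t m)) \<in> {p<..<q} \<or> \<sigma> (r (t (Suc m))) \<in> {p<..<q}" using wm sw s by auto
        then show ?thesis using sg unfolding len_def by auto
      qed
      then show False using jmin[OF mC] lenj by simp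
    qed
  qed
  have seg1: "segment_between (path_image c1) (b p) (b q)"
  proof -
    obtain h where "homeomorphism {0..1} (path_image c1) c1 h" using homeomorphism_arc[OF LA(1)] by blast
    moreover have "c1 0 = b p" "c1 1 = b q" using LA(3,4) unfolding pathstart_def pathfinish_def by auto
    ultimately show ?thesis unfolding segment_between_def by blast
  qed
  have seg2: "segment_between (path_image c) (b p) (b q)"
  proof -
    obtain h where "homeomorphism {0..1} (path_image c) c h" using homeomorphism_arc[OF arcc] by blast
    moreover have "c 0 = b p" "c 1 = b q" using cst unfolding pathstart_def pathfinish_def by auto
    ultimately show ?thesis unfolding segment_between_def by blast
  qed
  have bpr: "b p \<in> \<rho>" "b q \<in> \<rho>" using bpqin crho by auto
  have rho_c1: "\<rho> \<inter> path_image c1 = {b p, b q}"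
  proof
    show "\<rho> \<inter> path_image c1 \<subseteq> {b p, b q}"
    proof
      fix w assume w: "w \<in> \<rho> \<inter> path_image c1"
      then obtain s where s: "s \<in> {p..q}" "w = b s" using LA(7) by auto
      show "w \<in> {b p, b q}"
      proof (cases "s = p \<or> s = q")
        case True then show ?thesis using s by auto
      next
        case False then have "s \<in> {p<..<q}" using s by auto
        then show ?thesis using key w s by auto
      qed
    qed
    show "{b p, b q} \<subseteq> \<rho> \<inter> path_image c1" using bpr LA(7) pq by auto
  qed
  have zc: "z \<notin> path_image c"
  proof
    assume "z \<in> path_image c"
    then obtain s where "s \<in> {t j..t (Suc j)}" "r s = r 0" using imc r(4) by auto
    then show False using loop_inj2[OF r(1), of s 0] tj01 by auto
  qed
  have dd: "path_image c1 \<subseteq> \<beta> \<and> path_image c \<subseteq> \<rho> \<and>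
        segment_between (path_image c1) (b p) (b q) \<and> segment_between (path_image c) (b p) (b q) \<and>
        \<beta> \<inter> path_image c = {b p, b q} \<and> \<rho> \<inter> path_image c1 = {b p, b q}"
    using LA(10) crho seg1 seg2 cbeta rho_c1 by (auto simp: Int_commute)
  have "digon \<beta> \<rho> (path_image c1) (path_image c)"
    unfolding digon_def by (rule exI[of _ "b p"], rule exI[of _ "b q"], rule dd)
  moreover have "z \<notin> path_image c1 \<union> path_image c" using zc zc1 unfolding LA(7) by blast
  ultimately show ?thesis by blast
qed
end
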